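(* Let $\mathbb{H}^n$ be $\mathbb{R}^n$ or $\mathbb{C}^n$, and let $m\ge \frac{n(n+1)}{2}$ in the real case and $m\ge n^2$ in the complex case. The set of all $m$-element Parseval frames for $\mathbb{H}^n$ which are injective is dense, with respect to the distance $d$, in the set of all $m$-element Parseval frames for $\mathbb{H}^n$.
   Context: A frame $\{x_k\}_{k=1}^m$ for $\mathbb{H}^n$ is Parseval if $\sum_{k=1}^m|\langle x,x_k\rangle|^2=\|x\|^2$ for all $x$. A family $\{x_k\}$ is called injective if whenever a self-adjoint operator $T$ satisfies $\langle Tx_k,x_k\rangle=0$ for all $k$, then $T=0$. For $m$-element frames, $d(\{x_k\},\{y_k\})^2=\sum_{k=1}^m\|x_k-y_k\|^2$. *)

theory Defs
  imports "HOL-Analysis.Analysis"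
begin

definition cinner :: "complex^'n \<Rightarrow> complex^'n \<Rightarrow> complex" where
  "cinner x y = (\<Sum>i\<in>UNIV. x$i * cnj (y$i))"

text \<open>m-element families are indexed by a finite type 'm with CARD('m) = m.\<close>

definition parseval_real :: "('m::finite \<Rightarrow> real^'n) \<Rightarrow> bool" where
  "parseval_real F \<longleftrightarrow> (\<forall>x. (\<Sum>k\<in>UNIV. (x \<bullet> F k)^2) = (norm x)^2)"

definition parseval_complex :: "('m::finite \<Rightarrow> complex^'n) \<Rightarrow> bool" where
  "parseval_complex F \<longleftrightarrow> (\<forall>x. (\<Sum>k\<in>UNIV. (cmod (cinner x (F k)))^2) = (norm x)^2)"

definition self_adjoint_real :: "(real^'n \<Rightarrow> real^'n) \<Rightarrow> bool" where
  "self_adjoint_real T \<longleftrightarrow> linear T \<and> (\<forall>x y. T x \<bullet> y = x \<bullet> T y)"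

definition self_adjoint_complex :: "(complex^'n \<Rightarrow> complex^'n) \<Rightarrow> bool" where
  "self_adjoint_complex T \<longleftrightarrow> (\<forall>x y. T x + T y = T (x + y)) \<and> (\<forall>c x. T (c *s x) = c *s T x)
     \<and> (\<forall>x y. cinner (T x) y = cinner x (T y))"

definition injective_real :: "('m::finite \<Rightarrow> real^'n) \<Rightarrow> bool" where
  "injective_real F \<longleftrightarrow>
     (\<forall>T. self_adjoint_real T \<and> (\<forall>k. T (F k) \<bullet> F k = 0) \<longrightarrow> T = (\<lambda>_. 0))"

definition injective_complex :: "('m::finite \<Rightarrow> complex^'n) \<Rightarrow> bool" where
  "injective_complex F \<longleftrightarrow>
     (\<forall>T. self_adjoint_complex T \<and> (\<forall>k. cinner (T (F k)) (F k) = 0) \<longrightarrow> T = (\<lambda>_. 0))"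

definition frame_dist :: "('m::finite \<Rightarrow> 'a::real_normed_vector) \<Rightarrow> ('m \<Rightarrow> 'a) \<Rightarrow> real" where
  "frame_dist F G = sqrt (\<Sum>k\<in>UNIV. (norm (F k - G k))^2)"

end

theory Submission
  imports Defs "HOL-Computational_Algebra.Formal_Power_Series" "HOL-Library.Countable"
begin

locale cjl =
  fixes cj :: "'a::{real_normed_field,banach} \<Rightarrow> 'a"
  assumes cj_add: "cj (a + b) = cj a + cj b"
    and cj_mult: "cj (a * b) = cj a * cj b"
    and cj_cj [simp]: "cj (cj a) = a"
    and cj_of_real [simp]: "cj (of_real r) = of_real r"
    and cj_normsq: "a * cj a = of_real ((norm a)^2)"
begin

lemma cj_zero [simp]: "cj 0 = 0"
  using cj_add[of 0 0] by simp

lemma cj_one [simp]: "cj 1 = 1"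
  using cj_of_real[of 1] by simp

lemma cj_minus [simp]: "cj (- a) = - cj a"
proof -
  have "cj a + cj (- a) = 0" using cj_add[of a "-a"] by simp
  then show ?thesis by (metis add_eq_0_iff)
qed

lemma cj_diff: "cj (a - b) = cj a - cj b"
  using cj_add[of a "-b"] by simp

lemma cj_sum: "cj (sum f A) = sum (\<lambda>x. cj (f x)) A"
  by (induction A rule: infinite_finite_induct) (auto simp: cj_add)

lemma cj_scaleR: "cj (r *\<^sub>R a) = r *\<^sub>R cj a"
  by (simp add: scaleR_conv_of_real cj_mult)

lemma cj_eq_0_iff [simp]: "cj a = 0 \<longleftrightarrow> a = 0"
  by (metis cj_cj cj_zero)

lemma norm_cj [simp]: "norm (cj a) = norm a"
proof (cases "a = 0")
  case False
  have "norm a * norm (cj a) = norm a * norm a"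
    using arg_cong[OF cj_normsq[of a], of norm] by (simp add: norm_mult power2_eq_square)
  then show ?thesis using False by simp
qed simp

definition ip :: "'a^'n \<Rightarrow> 'a^'n \<Rightarrow> 'a" where
  "ip x y = (\<Sum>i\<in>UNIV. x$i * cj (y$i))"

lemma ip_add_left: "ip (x + y) z = ip x z + ip y z"
  by (simp add: ip_def distrib_right sum.distrib)

lemma ip_add_right: "ip x (y + z) = ip x y + ip x z"
  by (simp add: ip_def cj_add distrib_left sum.distrib)

lemma ip_diff_left: "ip (x - y) z = ip x z - ip y z"
  by (simp add: ip_def left_diff_distrib sum_subtractf)

lemma ip_diff_right: "ip x (y - z) = ip x y - ip x z"
  by (simp add: ip_def cj_diff right_diff_distrib sum_subtractf)

lemma ip_zero_left [simp]: "ip 0 y = 0" and ip_zero_right [simp]: "ip x 0 = 0"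
  by (simp_all add: ip_def)

lemma ip_smult_left: "ip (c *s x) y = c * ip x y"
  by (simp add: ip_def sum_distrib_left mult.assoc)

lemma ip_smult_right: "ip x (c *s y) = cj c * ip x y"
  by (simp add: ip_def sum_distrib_left cj_mult mult.assoc mult.left_commute)

lemma ip_scaleR_left: "ip (c *\<^sub>R x) y = c *\<^sub>R ip x y"
  by (simp add: ip_def scaleR_sum_right)

lemma ip_scaleR_right: "ip x (c *\<^sub>R y) = c *\<^sub>R ip x y"
  by (simp add: ip_def scaleR_sum_right cj_scaleR)

lemma ip_cj: "cj (ip x y) = ip y x"
  by (simp add: ip_def cj_sum cj_mult mult.commute)

lemma normsq_vec: "(norm x)^2 = (\<Sum>i\<in>UNIV. (norm (x$i))^2)"
  by (simp add: norm_vec_def L2_set_def sum_nonneg)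

lemma ip_self: "ip x x = of_real ((norm x)^2)"
  by (simp add: ip_def cj_normsq normsq_vec)

lemma ip_self_eq_0: "ip x x = 0 \<longleftrightarrow> x = 0"
  by (simp add: ip_self)

definition hT :: "'a^'c^'r \<Rightarrow> 'a^'r^'c" where
  "hT A = (\<chi> i j. cj (A$j$i))"

lemma hT_hT [simp]: "hT (hT A) = A"
  by (simp add: hT_def vec_eq_iff)

lemma ip_matrix: "ip (A *v x) y = ip x (hT A *v y)"
proof -
  have "ip (A *v x) y = (\<Sum>i\<in>UNIV. \<Sum>j\<in>UNIV. A$i$j * x$j * cj (y$i))"
    by (simp add: ip_def matrix_vector_mult_def sum_distrib_right)
  also have "\<dots> = (\<Sum>j\<in>UNIV. \<Sum>i\<in>UNIV. A$i$j * x$j * cj (y$i))"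
    by (rule sum.swap)
  also have "\<dots> = ip x (hT A *v y)"
    by (simp add: ip_def hT_def matrix_vector_mult_def cj_sum cj_mult sum_distrib_left mult_ac)
  finally show ?thesis .
qed

lemma matrix_eq_0_if: "(\<And>x. (A::'a^'c^'r) *v x = 0) \<Longrightarrow> A = 0"
proof -
  assume h: "\<And>x. A *v x = 0"
  show "A = 0"
  proof (simp add: vec_eq_iff, intro allI)
    fix i j
    have "(A *v axis j 1) $ i = A$i$j"
      by (simp add: matrix_vector_mult_def axis_def if_distrib cong: if_cong)
    then show "A$i$j = 0" using h by simp
  qed
qed

lemma polarization:
  fixes P :: "'a^'n^'n"
  assumes herm: "hT P = P" and q: "\<And>x. ip (P *v x) x = 0"
  shows "P = 0"
proof -
  have w0: "ip (P *v x) y = 0" for x y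
  proof -
    have e: "ip (P *v x) (c *s y) + cj (ip (P *v x) (c *s y)) = 0" for c
    proof -
      have "0 = ip (P *v (x + c *s y)) (x + c *s y)" using q by simp
      also have "\<dots> = ip (P *v x) x + ip (P *v (c *s y)) (c *s y) + ip (P *v x) (c *s y) + ip (P *v (c *s y)) x"
        by (simp add: matrix_vector_right_distrib ip_add_left ip_add_right algebra_simps)
      also have "ip (P *v (c *s y)) x = cj (ip (P *v x) (c *s y))"
        by (metis herm ip_cj ip_matrix)
      finally show ?thesis using q by simp
    qed
    define w where "w = ip (P *v x) y"
    have eq: "cj w * w + cj (cj w * w) = 0"
      using e[of w] by (simp add: ip_smult_right w_def)
    have h1: "cj w * w = of_real ((norm w)^2)"
      using cj_normsq[of w] by (simp add: mult.commute)
    have "of_real ((norm w)^2) + of_real ((norm w)^2) = (0::'a)"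
      using eq by (simp only: h1 cj_of_real)
    then have "(norm w)^2 + (norm w)^2 = 0"
      by (simp only: of_real_add[symmetric] of_real_eq_0_iff)
    then show ?thesis by (simp add: w_def)
  qed
  show ?thesis
  proof (rule matrix_eq_0_if)
    fix x
    have "ip (P *v x) (P *v x) = 0" by (rule w0)
    then show "P *v x = 0" by (simp only: ip_self_eq_0)
  qed
qed

end

lemma sum_swap3: "(\<Sum>a\<in>A. \<Sum>b\<in>B. \<Sum>k\<in>C. f a b k) = (\<Sum>k\<in>C. \<Sum>a\<in>A. \<Sum>b\<in>B. f a b k)"
proof -
  have "(\<Sum>a\<in>A. \<Sum>b\<in>B. \<Sum>k\<in>C. f a b k) = (\<Sum>a\<in>A. \<Sum>k\<in>C. \<Sum>b\<in>B. f a b k)"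
    by (rule sum.cong[OF refl], rule sum.swap)
  also have "\<dots> = (\<Sum>k\<in>C. \<Sum>a\<in>A. \<Sum>b\<in>B. f a b k)"
    by (rule sum.swap)
  finally show ?thesis .
qed

context cjl
begin

definition frop :: "('m::finite \<Rightarrow> 'a^'n) \<Rightarrow> 'a^'n^'n" where
  "frop F = (\<chi> i j. \<Sum>k\<in>UNIV. F k $ i * cj (F k $ j))"

definition parsevalg :: "('m::finite \<Rightarrow> 'a^'n) \<Rightarrow> bool" where
  "parsevalg F \<longleftrightarrow> (\<forall>x. (\<Sum>k\<in>UNIV. (norm (ip x (F k)))^2) = (norm x)^2)"

definition sag :: "('a^'n \<Rightarrow> 'a^'n) \<Rightarrow> bool" where
  "sag T \<longleftrightarrow> (\<forall>x y. T x + T y = T (x + y)) \<and> (\<forall>c x. T (c *s x) = c *s T x)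
     \<and> (\<forall>x y. ip (T x) y = ip x (T y))"

definition injg :: "('m::finite \<Rightarrow> 'a^'n) \<Rightarrow> bool" where
  "injg F \<longleftrightarrow> (\<forall>T. sag T \<and> (\<forall>k. ip (T (F k)) (F k) = 0) \<longrightarrow> T = (\<lambda>_. 0))"

lemma frop_quad: "of_real (\<Sum>k\<in>UNIV. (norm (ip x (F k)))^2) = ip (frop F *v x) x"
proof -
  have "of_real (\<Sum>k\<in>UNIV. (norm (ip x (F k)))^2) = (\<Sum>k\<in>UNIV. ip x (F k) * cj (ip x (F k)))"
    by (simp add: cj_normsq)
  also have "\<dots> = (\<Sum>k\<in>UNIV. \<Sum>i\<in>UNIV. \<Sum>j\<in>UNIV. F k $ j * cj (F k $ i) * x $ i * cj (x $ j))"
    by (simp add: ip_cj) (simp add: ip_def sum_product mult_ac)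
  also have "\<dots> = (\<Sum>i\<in>UNIV. \<Sum>j\<in>UNIV. \<Sum>k\<in>UNIV. F k $ j * cj (F k $ i) * x $ i * cj (x $ j))"
    by (rule sum_swap3[symmetric])
  also have "\<dots> = (\<Sum>j\<in>UNIV. \<Sum>i\<in>UNIV. \<Sum>k\<in>UNIV. F k $ j * cj (F k $ i) * x $ i * cj (x $ j))"
    by (rule sum.swap)
  also have "\<dots> = ip (frop F *v x) x"
    by (simp add: ip_def frop_def matrix_vector_mult_def sum_distrib_right)
  finally show ?thesis .
qed

lemma hT_mat1 [simp]: "hT (mat 1) = mat 1"
  by (simp add: hT_def mat_def vec_eq_iff)

lemma hT_add: "hT (A + B) = hT A + hT B"
  by (simp add: hT_def vec_eq_iff cj_add)

lemma hT_diff: "hT (A - B) = hT A - hT B"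
  by (simp add: hT_def vec_eq_iff cj_diff)

lemma hT_scaleR: "hT (c *\<^sub>R A) = c *\<^sub>R hT A"
  by (simp add: hT_def vec_eq_iff cj_scaleR)

lemma hT_mult: "hT (A ** B) = hT B ** hT A"
  by (simp add: hT_def vec_eq_iff matrix_matrix_mult_def cj_sum cj_mult mult.commute)

lemma hT_frop: "hT (frop F) = frop F"
  by (simp add: hT_def frop_def vec_eq_iff cj_sum cj_mult mult.commute)

lemma parseval_iff: "parsevalg F \<longleftrightarrow> frop F = mat 1"
proof
  assume p: "parsevalg F"
  have "ip ((frop F - mat 1) *v x) x = 0" for x
  proof -
    have "ip (frop F *v x) x = ip x x"
      using p frop_quad[of x F] by (simp add: parsevalg_def ip_self)
    then show ?thesis by (simp add: matrix_vector_mult_diff_rdistrib ip_diff_left)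
  qed
  moreover have "hT (frop F - mat 1) = frop F - mat 1"
    by (simp add: hT_diff hT_frop)
  ultimately have "frop F - mat 1 = 0"
    using polarization by blast
  then show "frop F = mat 1" by simp
next
  assume "frop F = mat 1"
  then have "of_real (\<Sum>k\<in>UNIV. (norm (ip x (F k)))^2) = (of_real ((norm x)^2) :: 'a)" for x
    using frop_quad[of x F] by (simp add: ip_self)
  then show "parsevalg F"
    unfolding parsevalg_def using of_real_eq_iff by blast
qed

lemma frop_mult: "frop (\<lambda>k. A *v G k) = A ** frop G ** hT A"
proof -
  have "frop (\<lambda>k. A *v G k) $ i $ j = (A ** frop G ** hT A) $ i $ j" for i j
  proof -
    have "frop (\<lambda>k. A *v G k) $ i $ j =
      (\<Sum>k\<in>UNIV. \<Sum>a\<in>UNIV. \<Sum>b\<in>UNIV. A$i$a * G k $ a * (cj (A$j$b) * cj (G k $ b)))"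
      by (simp add: frop_def matrix_vector_mult_def cj_sum cj_mult sum_product)
    also have "\<dots> = (\<Sum>a\<in>UNIV. \<Sum>b\<in>UNIV. \<Sum>k\<in>UNIV. A$i$a * G k $ a * (cj (A$j$b) * cj (G k $ b)))"
      by (rule sum_swap3[symmetric])
    also have "\<dots> = (\<Sum>b\<in>UNIV. \<Sum>a\<in>UNIV. \<Sum>k\<in>UNIV. A$i$a * G k $ a * (cj (A$j$b) * cj (G k $ b)))"
      by (rule sum.swap)
    also have "\<dots> = (A ** frop G ** hT A) $ i $ j"
      by (simp add: frop_def hT_def matrix_matrix_mult_def sum_distrib_left sum_distrib_right mult_ac)
    finally show ?thesis .
  qed
  then show ?thesis by (simp add: vec_eq_iff)
qed

lemma sag_mat: "hT Y = Y \<Longrightarrow> sag (\<lambda>x. Y *v x)"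
  unfolding sag_def
  by (metis ip_matrix matrix_vector_right_distrib vec.scale)

lemma sag_zero: "sag T \<Longrightarrow> T 0 = 0"
  unfolding sag_def by (metis add_cancel_right_right add_0)

lemma sag_sum: "sag T \<Longrightarrow> T (sum f A) = sum (\<lambda>x. T (f x)) A"
  by (induction A rule: infinite_finite_induct) (auto simp: sag_zero, metis sag_def)

definition mt :: "('a^'n \<Rightarrow> 'a^'n) \<Rightarrow> 'a^'n^'n" where
  "mt T = (\<chi> i j. T (axis j 1) $ i)"

lemma sag_expand: assumes "sag T" shows "T x = mt T *v x"
proof -
  have "T x = T (\<Sum>j\<in>UNIV. x$j *s axis j 1)" by (simp add: basis_expansion)
  also have "\<dots> = (\<Sum>j\<in>UNIV. x$j *s T (axis j 1))"
    using assms by (simp add: sag_sum) (simp add: sag_def)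
  also have "\<dots> = mt T *v x"
    by (simp add: mt_def matrix_vector_mult_def vec_eq_iff mult.commute)
  finally show ?thesis .
qed

lemma ip_axis: "ip v (axis i 1) = v $ i"
  by (simp add: ip_def axis_def if_distrib cong: if_cong)

lemma hT_mt: assumes "sag T" shows "hT (mt T) = mt T"
proof -
  have "cj (T (axis i 1) $ j) = T (axis j 1) $ i" for i j
  proof -
    have "cj (T (axis i 1) $ j) = cj (ip (T (axis i 1)) (axis j 1))" by (simp add: ip_axis)
    also have "\<dots> = ip (axis j 1) (T (axis i 1))" by (simp add: ip_cj)
    also have "\<dots> = ip (T (axis j 1)) (axis i 1)" using assms by (simp add: sag_def)
    finally show ?thesis by (simp add: ip_axis)
  qed
  then show ?thesis by (simp add: hT_def mt_def vec_eq_iff)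
qed

lemma injg_transform:
  assumes inj: "injg G" and hA: "hT A = A" and AB: "A ** B = mat 1" and BA: "B ** A = mat 1"
  shows "injg (\<lambda>k. A *v G k)"
  unfolding injg_def
proof (intro allI impI, elim conjE)
  fix T assume sT: "sag T" and z: "\<forall>k. ip (T (A *v G k)) (A *v G k) = 0"
  define T' where "T' = (\<lambda>x. A *v T (A *v x))"
  have "sag T'"
    unfolding sag_def T'_def
  proof (intro conjI allI)
    fix x y
    show "A *v T (A *v x) + A *v T (A *v y) = A *v T (A *v (x + y))"
      using sT unfolding sag_def by (metis matrix_vector_right_distrib)
  next
    fix c x
    show "A *v T (A *v (c *s x)) = c *s (A *v T (A *v x))"
      using sT by (simp add: sag_def vec.scale)
  next
    fix x y
    have "ip (A *v T (A *v x)) y = ip (T (A *v x)) (A *v y)" using hA by (simp add: ip_matrix)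
    also have "\<dots> = ip (A *v x) (T (A *v y))" using sT by (simp add: sag_def)
    also have "\<dots> = ip x (A *v T (A *v y))" using hA by (simp add: ip_matrix)
    finally show "ip (A *v T (A *v x)) y = ip x (A *v T (A *v y))" .
  qed
  moreover have "\<forall>k. ip (T' (G k)) (G k) = 0"
    using z hA by (simp add: T'_def ip_matrix)
  ultimately have T'0: "T' = (\<lambda>_. 0)" using inj unfolding injg_def by blast
  show "T = (\<lambda>_. 0)"
  proof
    fix y
    have "A *v T (A *v (B *v y)) = 0" using T'0 by (metis T'_def)
    then have "B *v (A *v T (A *v (B *v y))) = 0" by simp
    then have "T (A *v (B *v y)) = 0" by (simp add: matrix_vector_mul_assoc BA)
    then show "T y = 0" by (simp add: matrix_vector_mul_assoc AB)
  qed
qed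

end

lemma normsq_vec': "(norm x)^2 = (\<Sum>i\<in>UNIV. (norm (x$i))^2)"
  by (simp add: norm_vec_def L2_set_def sum_nonneg)

lemma norm_entry_bound:
  fixes a b :: "'a::real_normed_field^'k"
  shows "norm (\<Sum>k\<in>UNIV. a$k * b$k) \<le> norm a * norm b"
proof -
  have "norm (\<Sum>k\<in>UNIV. a$k * b$k) \<le> (\<Sum>k\<in>UNIV. norm (a$k) * norm (b$k))"
    by (rule order_trans[OF norm_sum], simp add: norm_mult)
  also have "\<dots> = (\<Sum>k\<in>UNIV. \<bar>norm (a$k)\<bar> * \<bar>norm (b$k)\<bar>)" by simp
  also have "\<dots> \<le> L2_set (\<lambda>k. norm (a$k)) UNIV * L2_set (\<lambda>k. norm (b$k)) UNIV"
    by (rule L2_set_mult_ineq)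
  finally show ?thesis by (simp add: norm_vec_def)
qed

lemma norm_mv:
  fixes A :: "'a::real_normed_field^'k^'i"
  shows "norm (A *v x) \<le> norm A * norm x"
proof -
  have e: "norm ((A *v x)$i) \<le> norm (A$i) * norm x" for i
    using norm_entry_bound[of "A$i" x] by (simp add: matrix_vector_mult_def)
  have "(norm (A *v x))^2 = (\<Sum>i\<in>UNIV. (norm ((A *v x)$i))^2)" by (rule normsq_vec')
  also have "\<dots> \<le> (\<Sum>i\<in>UNIV. (norm (A$i) * norm x)^2)"
    by (rule sum_mono, rule power_mono[OF e], simp)
  also have "\<dots> = (norm A * norm x)^2"
    by (simp add: power_mult_distrib sum_distrib_right[symmetric] normsq_vec'[of A])
  finally show ?thesis
    by (rule power2_le_imp_le, simp)
qed

lemma norm_mm: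
  fixes A :: "'a::real_normed_field^'k^'i" and B :: "'a^'j^'k"
  shows "norm (A ** B) \<le> norm A * norm B"
proof -
  have e: "norm ((A ** B)$i$j) \<le> norm (A$i) * norm (column j B)" for i j
    using norm_entry_bound[of "A$i" "column j B"] by (simp add: matrix_matrix_mult_def column_def)
  have "(norm (A ** B))^2 = (\<Sum>i\<in>UNIV. \<Sum>j\<in>UNIV. (norm ((A ** B)$i$j))^2)"
    by (simp add: normsq_vec'[of "A ** B"] normsq_vec'[of "(A ** B) $ _"])
  also have "\<dots> \<le> (\<Sum>i\<in>UNIV. \<Sum>j\<in>UNIV. (norm (A$i) * norm (column j B))^2)"
    by (intro sum_mono power_mono e) simp
  also have "\<dots> = (\<Sum>i\<in>UNIV. (norm (A$i))^2) * (\<Sum>j\<in>UNIV. (norm (column j B))^2)"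
    by (simp add: power_mult_distrib sum_product)
  also have "(\<Sum>j\<in>UNIV. (norm (column j B))^2) = (\<Sum>j\<in>UNIV. \<Sum>k\<in>UNIV. (norm (B$k$j))^2)"
    by (simp only: column_def normsq_vec' vec_lambda_beta)
  also have "\<dots> = (\<Sum>k\<in>UNIV. \<Sum>j\<in>UNIV. (norm (B$k$j))^2)" by (rule sum.swap)
  also have "\<dots> = (norm B)^2" by (simp add: normsq_vec'[of B] normsq_vec'[of "B $ _"])
  also have "(\<Sum>i\<in>UNIV. (norm (A$i))^2) = (norm A)^2" by (simp add: normsq_vec'[of A])
  finally show ?thesis
    by (metis mult_nonneg_nonneg norm_ge_zero power2_le_imp_le power_mult_distrib)
qed


primrec mpow :: "'a::real_normed_field^'n^'n \<Rightarrow> nat \<Rightarrow> 'a^'n^'n" where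
  "mpow E 0 = mat 1"
| "mpow E (Suc k) = E ** mpow E k"

lemma mpow_add: "mpow E (i + j) = mpow E i ** mpow E j"
  by (induction i) (simp_all add: matrix_mul_assoc)

lemma mpow_comm: "E ** mpow E k = mpow E k ** E"
  by (induction k) (simp_all add: matrix_mul_assoc)

lemma mpow_Suc': "mpow E (Suc k) = mpow E k ** E"
  by (simp add: mpow_comm)

lemma norm_mpow_Suc: "norm (mpow E (Suc k)) \<le> norm E ^ Suc k"
proof (induction k)
  case 0 then show ?case by simp
next
  case (Suc k)
  have "norm (mpow E (Suc (Suc k))) \<le> norm E * norm (mpow E (Suc k))"
    by (simp only: mpow.simps(2)[of E "Suc k"] norm_mm)
  also have "\<dots> \<le> norm E * norm E ^ Suc k"
    by (rule mult_left_mono[OF Suc.IH], simp)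
  finally show ?case by simp
qed

lemma norm_mpow:
  fixes E :: "'a::real_normed_field^'n^'n"
  shows "norm (mpow E k) \<le> (1 + norm (mat 1 :: 'a^'n^'n)) * norm E ^ k"
proof (cases k)
  case 0 then show ?thesis using norm_ge_zero[of "mat 1 :: 'a^'n^'n"] by simp
next
  case (Suc j)
  have "norm (mpow E k) \<le> 1 * norm E ^ k" using norm_mpow_Suc[of E j] Suc by simp
  also have "\<dots> \<le> (1 + norm (mat 1 :: 'a^'n^'n)) * norm E ^ k"
    by (rule mult_right_mono) simp_all
  finally show ?thesis .
qed

lemma matrix_add_rdistrib: "(A + B) ** C = A ** C + B ** (C::'a::semiring_1^'j^'k)"
  by (simp add: vec_eq_iff matrix_matrix_mult_def distrib_right sum.distrib)

lemma mm_scaleR_left: "(c *\<^sub>R X) ** Y = c *\<^sub>R (X ** (Y::'a::real_normed_field^'j^'k))"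
  by (simp add: vec_eq_iff matrix_matrix_mult_def scaleR_sum_right)

lemma mm_scaleR_right: "X ** (c *\<^sub>R Y) = c *\<^sub>R (X ** (Y::'a::real_normed_field^'j^'k))"
  by (simp add: vec_eq_iff matrix_matrix_mult_def scaleR_sum_right)

lemma bb_mm: "bounded_bilinear (\<lambda>(X::'a::real_normed_field^'k^'i) (Y::'a^'j^'k). X ** Y)"
  by (rule bounded_bilinear.intro)
     (auto simp: matrix_add_ldistrib matrix_add_rdistrib mm_scaleR_left mm_scaleR_right
       intro!: exI[of _ 1] norm_mm)

lemma mm_sum_left: "(\<Sum>i\<in>I. f i) ** Y = (\<Sum>i\<in>I. f i ** (Y::'a::real_normed_field^'j^'k))"
  by (induction I rule: infinite_finite_induct) (simp_all add: matrix_add_rdistrib)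

lemma mm_sum_right: "X ** (\<Sum>i\<in>I. f i) = (\<Sum>i\<in>I. X ** (f i::'a::real_normed_field^'j^'k))"
  by (induction I rule: infinite_finite_induct) (simp_all add: matrix_add_ldistrib)

definition bc :: "nat \<Rightarrow> real" where "bc k = ((-1/2::real) gchoose k)"

lemma bc_le1: "\<bar>bc k\<bar> \<le> 1"
proof (induction k)
  case 0 then show ?case by (simp add: bc_def)
next
  case (Suc k)
  have "bc (Suc k) = bc k * ((-1/2 - real k) / (real k + 1))"
    by (simp add: bc_def gbinomial_Suc_rec)
  moreover have "\<bar>(-1/2 - real k) / (real k + 1)\<bar> \<le> 1"
    by (simp add: abs_if field_simps)
  ultimately have "\<bar>bc (Suc k)\<bar> \<le> 1 * 1"
    by (simp only: abs_mult, intro mult_mono Suc.IH) simp_all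
  then show ?case by simp
qed

lemma bc_conv: "(\<Sum>i\<le>k. bc i * bc (k - i)) = (-1)^k"
proof -
  have "(\<Sum>i\<le>k. bc i * bc (k - i)) = (\<Sum>i=0..k. ((-1/2::real) gchoose i) * ((-1/2) gchoose (k - i)))"
    by (simp add: bc_def atLeast0AtMost)
  also have "\<dots> = ((-1/2) + (-1/2) gchoose k)" by (rule gbinomial_Vandermonde)
  also have "\<dots> = (- 1 gchoose k)" by simp
  also have "\<dots> = (-1)^k * ((1 + real k - 1) gchoose k)" by (rule gbinomial_minus)
  also have "\<dots> = (-1)^k" by (simp add: binomial_gbinomial[symmetric])
  finally show ?thesis .
qed


definition sqi :: "'a::{real_normed_field,banach}^'n^'n \<Rightarrow> 'a^'n^'n" where
  "sqi E = (\<Sum>k. bc k *\<^sub>R mpow E k)"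

context
  fixes E :: "'a::{real_normed_field,banach}^'n^'n"
  assumes nE: "norm E < 1"
begin

lemma C0_pos: "(1 + norm (mat 1 :: 'a^'n^'n)) > 0"
  using norm_ge_zero[of "mat 1 :: 'a^'n^'n"] by linarith

lemma term_bound: "norm (c *\<^sub>R mpow E k) \<le> \<bar>c\<bar> * ((1 + norm (mat 1 :: 'a^'n^'n)) * norm E ^ k)"
  by (simp add: mult_left_mono norm_mpow)

lemma term_bound_bc: "norm (bc k *\<^sub>R mpow E k) \<le> (1 + norm (mat 1 :: 'a^'n^'n)) * norm E ^ k"
proof -
  have "norm (bc k *\<^sub>R mpow E k) \<le> \<bar>bc k\<bar> * ((1 + norm (mat 1 :: 'a^'n^'n)) * norm E ^ k)" by (rule term_bound)
  also have "\<dots> \<le> 1 * ((1 + norm (mat 1 :: 'a^'n^'n)) * norm E ^ k)"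
    by (rule mult_right_mono[OF bc_le1]) (simp add: less_imp_le[OF C0_pos])
  finally show ?thesis by simp
qed

lemma sqi_summable: "summable (\<lambda>k. bc k *\<^sub>R mpow E k)"
proof (rule summable_comparison_test'[where g = "\<lambda>k. (1 + norm (mat 1 :: 'a^'n^'n)) * norm E ^ k"])
  show "summable (\<lambda>k. (1 + norm (mat 1 :: 'a^'n^'n)) * norm E ^ k)"
    using nE by (intro summable_mult summable_geometric) simp
qed (rule term_bound_bc)

lemma sqi_comm: "sqi E ** E = E ** sqi E"
proof -
  have bl1: "bounded_linear (\<lambda>X. X ** E)"
    by (rule bounded_bilinear.bounded_linear_left[OF bb_mm])
  have bl2: "bounded_linear (\<lambda>X. E ** X)"
    by (rule bounded_bilinear.bounded_linear_right[OF bb_mm])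
  have "sqi E ** E = (\<Sum>k. (bc k *\<^sub>R mpow E k) ** E)"
    unfolding sqi_def by (rule bounded_linear.suminf[OF bl1 sqi_summable])
  also have "\<dots> = (\<Sum>k. E ** (bc k *\<^sub>R mpow E k))"
    by (simp add: mm_scaleR_left mm_scaleR_right mpow_comm)
  also have "\<dots> = E ** sqi E"
    unfolding sqi_def by (rule bounded_linear.suminf[OF bl2 sqi_summable, symmetric])
  finally show ?thesis .
qed

lemma sqi_bound: "norm (sqi E - mat 1) \<le> norm E / (1 - norm E)"
proof -
  have s: "summable (\<lambda>k. bc k *\<^sub>R mpow E k)" by (rule sqi_summable)
  have "sqi E - mat 1 = (\<Sum>k. bc (Suc k) *\<^sub>R mpow E (Suc k))"
    using suminf_split_head[OF s] by (simp add: sqi_def bc_def)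
  moreover have "norm (\<Sum>k. bc (Suc k) *\<^sub>R mpow E (Suc k)) \<le> (\<Sum>k. norm E * norm E ^ k)"
  proof (rule norm_suminf_le)
    fix k
    have "norm (bc (Suc k) *\<^sub>R mpow E (Suc k)) \<le> \<bar>bc (Suc k)\<bar> * norm E ^ Suc k"
      using mult_left_mono[OF norm_mpow_Suc[of E k], of "\<bar>bc (Suc k)\<bar>"] by (simp del: mpow.simps power_Suc)
    also have "\<dots> \<le> 1 * norm E ^ Suc k"
      by (rule mult_right_mono[OF bc_le1]) simp
    finally show "norm (bc (Suc k) *\<^sub>R mpow E (Suc k)) \<le> norm E * norm E ^ k" by simp
  next
    show "summable (\<lambda>k. norm E * norm E ^ k)"
      using nE by (intro summable_mult summable_geometric) simp
  qed
  moreover have "(\<Sum>k. norm E * norm E ^ k) = norm E / (1 - norm E)"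
    using nE by (simp add: suminf_mult suminf_geometric divide_simps)
  ultimately show ?thesis by simp
qed

lemma sqi_sq: "sqi E ** sqi E ** (mat 1 + E) = mat 1"
proof -
  define r where "r = norm E"
  have r0: "0 \<le> r" and r1: "r < 1" using nE by (simp_all add: r_def)
  define K where "K = 1 + norm (mat 1 :: 'a^'n^'n)"
  have K0: "K > 0" using C0_pos by (simp add: K_def)
  define P where "P N = (\<Sum>k<N. bc k *\<^sub>R mpow E k)" for N
  define Q where "Q N = (\<Sum>k<N. ((-1::real)^k) *\<^sub>R mpow E k)" for N
  have lim1: "(\<lambda>N. P N ** P N ** (mat 1 + E)) \<longlonglongrightarrow> sqi E ** sqi E ** (mat 1 + E)"
  proof -
    have "P \<longlonglongrightarrow> sqi E" unfolding P_def sqi_def by (rule summable_LIMSEQ[OF sqi_summable])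
    then have "(\<lambda>N. P N ** P N) \<longlonglongrightarrow> sqi E ** sqi E"
      using bounded_bilinear.tendsto[OF bb_mm] by blast
    then show ?thesis
      using bounded_bilinear.tendsto[OF bb_mm _ tendsto_const] by blast
  qed
  have Qid: "Q N ** (mat 1 + E) = mat 1 - ((-1::real)^N) *\<^sub>R mpow E N" for N
  proof (induction N)
    case 0 show ?case by (simp add: Q_def)
  next
    case (Suc N)
    have "Q (Suc N) ** (mat 1 + E) = Q N ** (mat 1 + E) + ((-1::real)^N) *\<^sub>R (mpow E N ** (mat 1 + E))"
      by (simp add: Q_def matrix_add_rdistrib mm_scaleR_left del: mpow.simps)
    also have "mpow E N ** (mat 1 + E) = mpow E N + mpow E (Suc N)"
      by (simp add: matrix_add_ldistrib mpow_Suc' del: mpow.simps)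
    finally show ?case using Suc.IH by (simp add: scaleR_right_distrib del: mpow.simps)
  qed
  have limQ: "(\<lambda>N. Q N ** (mat 1 + E)) \<longlonglongrightarrow> mat 1"
  proof -
    have "(\<lambda>N. ((-1::real)^N) *\<^sub>R mpow E N) \<longlonglongrightarrow> 0"
    proof (rule Lim_null_comparison)
      show "\<forall>\<^sub>F N in sequentially. norm (((-1::real)^N) *\<^sub>R mpow E N) \<le> K * r^N"
        using norm_mpow[of E] by (simp add: K_def r_def)
      show "(\<lambda>N. K * r^N) \<longlonglongrightarrow> 0"
        using r0 r1 by (intro tendsto_mult_right_zero LIMSEQ_power_zero) simp
    qed
    then have "(\<lambda>N. mat 1 - ((-1::real)^N) *\<^sub>R mpow E N) \<longlonglongrightarrow> mat 1 - 0"
      by (intro tendsto_diff tendsto_const)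
    then show ?thesis by (simp add: Qid)
  qed
  have PP: "P N ** P N = (\<Sum>(i,j)\<in>{..<N}\<times>{..<N}. (bc i * bc j) *\<^sub>R mpow E (i+j))" for N
  proof -
    have "P N ** P N = (\<Sum>i<N. \<Sum>j<N. (bc i *\<^sub>R mpow E i) ** (bc j *\<^sub>R mpow E j))"
      unfolding P_def mm_sum_left by (simp only: mm_sum_right)
    also have "\<dots> = (\<Sum>i<N. \<Sum>j<N. (bc i * bc j) *\<^sub>R mpow E (i+j))"
      by (simp add: mm_scaleR_left mm_scaleR_right mpow_add mult.commute)
    also have "\<dots> = (\<Sum>(i,j)\<in>{..<N}\<times>{..<N}. (bc i * bc j) *\<^sub>R mpow E (i+j))"
      by (rule sum.cartesian_product)
    finally show ?thesis .
  qed
  have QQ: "Q N = (\<Sum>(i,j)\<in>{(i,j). i+j<N}. (bc i * bc j) *\<^sub>R mpow E (i+j))" for N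
  proof -
    have "(\<Sum>(i,j)\<in>{(i,j). i+j<N}. (bc i * bc j) *\<^sub>R mpow E (i+j))
        = (\<Sum>k<N. \<Sum>i\<le>k. (bc i * bc (k-i)) *\<^sub>R mpow E (i + (k-i)))"
      by (rule sum.triangle_reindex)
    also have "\<dots> = (\<Sum>k<N. (\<Sum>i\<le>k. bc i * bc (k-i)) *\<^sub>R mpow E k)"
    proof -
      have "(\<Sum>i\<le>k. (bc i * bc (k-i)) *\<^sub>R mpow E (i + (k-i))) = (\<Sum>i\<le>k. bc i * bc (k-i)) *\<^sub>R mpow E k" for k
        by (auto simp: scaleR_sum_left intro!: sum.cong)
      then show ?thesis by simp
    qed
    also have "\<dots> = Q N" by (simp add: Q_def bc_conv)
    finally show ?thesis by simp
  qed
  define D where "D N = ({..<N}\<times>{..<N}) - {(i,j). i+j<N}" for N :: nat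
  have sub: "{(i,j). i+j<N} \<subseteq> {..<N}\<times>{..<N}" for N :: nat by auto
  have PQ: "P N ** P N = (\<Sum>(i,j)\<in>D N. (bc i * bc j) *\<^sub>R mpow E (i+j)) + Q N" for N
    unfolding PP QQ D_def by (rule sum.subset_diff[OF sub]) simp
  have Rb: "norm (\<Sum>(i,j)\<in>D N. (bc i * bc j) *\<^sub>R mpow E (i+j)) \<le> real N * real N * (K * r^N)" for N
  proof -
    have "norm (\<Sum>(i,j)\<in>D N. (bc i * bc j) *\<^sub>R mpow E (i+j)) \<le> (\<Sum>x\<in>D N. K * r^N)"
    proof (rule sum_norm_le)
      fix x assume x: "x \<in> D N"
      obtain i j where xij: "x = (i,j)" by force
      have ij: "N \<le> i + j" using x xij by (simp add: D_def)
      have "norm ((bc i * bc j) *\<^sub>R mpow E (i+j)) \<le> (\<bar>bc i\<bar> * \<bar>bc j\<bar>) * (K * r^(i+j))"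
        using norm_mpow[of E "i+j"] by (simp add: abs_mult mult_left_mono K_def r_def)
      also have "\<dots> \<le> 1 * (K * r^N)"
      proof (rule mult_mono)
        show "\<bar>bc i\<bar> * \<bar>bc j\<bar> \<le> 1" using bc_le1 by (simp add: mult_le_one)
        show "K * r ^ (i + j) \<le> K * r ^ N"
          using K0 r0 r1 ij by (intro mult_left_mono power_decreasing) simp_all
      qed (use K0 r0 in simp_all)
      finally show "norm (case x of (i,j) \<Rightarrow> (bc i * bc j) *\<^sub>R mpow E (i+j)) \<le> K * r^N"
        using xij by simp
    qed
    also have "\<dots> = real (card (D N)) * (K * r^N)" by simp
    also have "\<dots> \<le> real N * real N * (K * r^N)"
    proof (rule mult_right_mono)
      have "card (D N) \<le> card ({..<N}\<times>{..<N})"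
        unfolding D_def by (rule card_mono) auto
      then show "real (card (D N)) \<le> real N * real N"
        by (simp add: card_cartesian_product flip: of_nat_mult)
    qed (use K0 r0 in simp)
    finally show ?thesis .
  qed
  have limR0: "(\<lambda>N. real N * real N * (K * r^N)) \<longlonglongrightarrow> 0"
  proof -
    have "(\<lambda>N. real N * sqrt r ^ N) \<longlonglongrightarrow> 0"
      using powser_times_n_limit_0[of "sqrt r"] r0 r1 by simp
    then have "(\<lambda>N. (real N * sqrt r ^ N)^2 * K) \<longlonglongrightarrow> 0^2 * K"
      by (intro tendsto_intros)
    moreover have "(real N * sqrt r ^ N)^2 * K = real N * real N * (K * r^N)" for N
    proof -
      have "(sqrt r ^ N)^2 = r^N"
        by (metis power_mult mult.commute real_sqrt_pow2[OF r0])
      then show ?thesis by (simp add: power_mult_distrib power2_eq_square)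
    qed
    ultimately show ?thesis by simp
  qed
  have limR: "(\<lambda>N. (\<Sum>(i,j)\<in>D N. (bc i * bc j) *\<^sub>R mpow E (i+j)) ** (mat 1 + E)) \<longlonglongrightarrow> 0"
  proof (rule Lim_null_comparison)
    show "\<forall>\<^sub>F N in sequentially. norm ((\<Sum>(i,j)\<in>D N. (bc i * bc j) *\<^sub>R mpow E (i+j)) ** (mat 1 + E))
       \<le> real N * real N * (K * r^N) * norm (mat 1 + E)"
      by (intro always_eventually allI order_trans[OF norm_mm] mult_right_mono Rb) simp
    show "(\<lambda>N. real N * real N * (K * r^N) * norm (mat 1 + E)) \<longlonglongrightarrow> 0"
      using limR0 by (rule tendsto_mult_left_zero)
  qed
  have "(\<lambda>N. P N ** P N ** (mat 1 + E)) \<longlonglongrightarrow> 0 + mat 1"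
  proof -
    have "P N ** P N ** (mat 1 + E) = (\<Sum>(i,j)\<in>D N. (bc i * bc j) *\<^sub>R mpow E (i+j)) ** (mat 1 + E) + Q N ** (mat 1 + E)" for N
      by (simp add: PQ matrix_add_rdistrib del: mpow.simps)
    then show ?thesis using tendsto_add[OF limR limQ] by simp
  qed
  then show ?thesis using lim1 LIMSEQ_unique by fastforce
qed

end

context cjl
begin

lemma normsq_hT: "(norm (hT A))^2 = (norm (A::'a^'c^'r))^2"
proof -
  have "(norm (hT A))^2 = (\<Sum>i\<in>UNIV. \<Sum>j\<in>UNIV. (norm (A$j$i))^2)"
    unfolding hT_def by (simp only: normsq_vec' vec_lambda_beta norm_cj)
  also have "\<dots> = (\<Sum>j\<in>UNIV. \<Sum>i\<in>UNIV. (norm (A$j$i))^2)" by (rule sum.swap)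
  also have "\<dots> = (norm A)^2" by (simp add: normsq_vec'[of A] normsq_vec'[of "A $ _"])
  finally show ?thesis .
qed

lemma norm_hT: "norm (hT A) = norm (A::'a^'c^'r)"
  using normsq_hT[of A] by (simp add: power2_eq_iff_nonneg)

lemma bl_hT: "bounded_linear (hT :: 'a^'c^'r \<Rightarrow> 'a^'r^'c)"
  by (rule bounded_linear_intro[where K=1]) (simp_all add: hT_add hT_scaleR norm_hT)

lemma hT_mpow: "hT E = E \<Longrightarrow> hT (mpow E k) = mpow E k"
  by (induction k) (simp_all add: hT_mult mpow_comm)

lemma hT_sqi: assumes "hT E = E" "norm E < 1" shows "hT (sqi E) = sqi E"
proof -
  have "hT (sqi E) = (\<Sum>k. hT (bc k *\<^sub>R mpow E k))"
    unfolding sqi_def by (rule bounded_linear.suminf[OF bl_hT sqi_summable[OF assms(2)]])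
  also have "\<dots> = sqi E" by (simp add: hT_scaleR hT_mpow[OF assms(1)] sqi_def)
  finally show ?thesis .
qed

definition isp :: "(real \<Rightarrow> 'a) \<Rightarrow> bool" where
  "isp f \<longleftrightarrow> (\<exists>p. \<forall>t. f t = poly p (of_real t))"

lemma isp_const: "isp (\<lambda>t. c)"
  unfolding isp_def by (rule exI[of _ "[:c:]"]) simp

lemma isp_var: "isp (\<lambda>t. of_real t)"
  unfolding isp_def by (rule exI[of _ "[:0, 1:]"]) simp

lemma isp_add: "isp f \<Longrightarrow> isp g \<Longrightarrow> isp (\<lambda>t. f t + g t)"
  unfolding isp_def by (metis poly_add)

lemma isp_mult: "isp f \<Longrightarrow> isp g \<Longrightarrow> isp (\<lambda>t. f t * g t)"
  unfolding isp_def by (metis poly_mult)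

lemma isp_sum: "(\<And>x. x \<in> A \<Longrightarrow> isp (f x)) \<Longrightarrow> isp (\<lambda>t. \<Sum>x\<in>A. f x t)"
proof (induction A rule: infinite_finite_induct)
  case (infinite A) then show ?case by (simp add: isp_const)
next
  case empty then show ?case by (simp add: isp_const)
next
  case (insert x F) then show ?case by (simp add: isp_add)
qed

lemma isp_prod: "(\<And>x. x \<in> A \<Longrightarrow> isp (f x)) \<Longrightarrow> isp (\<lambda>t. \<Prod>x\<in>A. f x t)"
proof (induction A rule: infinite_finite_induct)
  case (infinite A) then show ?case by (simp add: isp_const)
next
  case empty then show ?case by (simp add: isp_const)
next
  case (insert x F) then show ?case by (simp add: isp_mult)
qed

lemma poly_map_cj: "poly (map_poly cj p) (of_real t) = cj (poly p (of_real t))"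
  by (induction p rule: pCons_induct) (simp_all add: map_poly_pCons cj_add cj_mult)

lemma isp_cj: "isp f \<Longrightarrow> isp (\<lambda>t. cj (f t))"
  unfolding isp_def by (metis poly_map_cj)

lemma finite_bad:
  fixes L :: "real \<Rightarrow> 'a^'A::finite^'B::finite"
  assumes P: "\<And>b a. isp (\<lambda>t. L t $ b $ a)" and inj1: "inj ((*v) (L 1))"
  shows "finite {t. \<not> inj ((*v) (L t))}"
proof -
  define M where "M t = hT (L t) ** L t" for t
  have Mv: "M t *v x = hT (L t) *v (L t *v x)" for t x
    by (simp add: M_def matrix_vector_mul_assoc)
  have "isp (\<lambda>t. M t $ i $ j)" for i j
    unfolding M_def hT_def matrix_matrix_mult_def
    by (simp, intro isp_sum isp_mult isp_cj P)
  then have "isp (\<lambda>t. det (M t))"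
    unfolding det_def by (intro isp_sum isp_mult isp_prod isp_const)
  then obtain p where p: "\<And>t. det (M t) = poly p (of_real t)"
    unfolding isp_def by blast
  have injM1: "inj ((*v) (M 1))"
  proof (rule injI)
    fix x y assume "M 1 *v x = M 1 *v y"
    then have "M 1 *v (x - y) = 0" by (simp add: matrix_vector_mult_diff_distrib)
    then have "ip (M 1 *v (x - y)) (x - y) = 0" by simp
    then have "ip (L 1 *v (x - y)) (L 1 *v (x - y)) = 0"
      by (simp add: Mv ip_matrix)
    then have "L 1 *v (x - y) = L 1 *v 0" by (simp add: ip_self_eq_0)
    then have "x - y = 0" using inj1 by (meson injD)
    then show "x = y" by simp
  qed
  have "det (M 1) \<noteq> 0"
    using det_nz_iff_inj_gen[OF matrix_vector_mul_linear_gen[of "M 1"]] injM1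
    by (simp add: matrix_of_matrix_vector_mul)
  then have "p \<noteq> 0" using p[of 1] by auto
  then have "finite {z. poly p z = 0}" by (rule poly_roots_finite)
  then have fin: "finite (of_real -` {z. poly p z = 0} :: real set)"
    by (rule finite_vimageI) (rule inj_of_real)
  have "{t. \<not> inj ((*v) (L t))} \<subseteq> of_real -` {z. poly p z = 0}"
  proof
    fix t assume t: "t \<in> {t. \<not> inj ((*v) (L t))}"
    show "t \<in> of_real -` {z. poly p z = 0}"
    proof (rule ccontr)
      assume "t \<notin> of_real -` {z. poly p z = 0}"
      then have "det (M t) \<noteq> 0" using p by simp
      then have "inj ((*v) (M t))"
        using det_nz_iff_inj_gen[OF matrix_vector_mul_linear_gen[of "M t"]]
        by (simp add: matrix_of_matrix_vector_mul)
      then have "inj ((*v) (L t))"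
        by (metis (no_types, lifting) Mv injD injI)
      then show False using t by simp
    qed
  qed
  then show ?thesis using fin finite_subset by blast
qed

end

context cjl
begin

definition crossop :: "('m::finite \<Rightarrow> 'a^'n) \<Rightarrow> ('m \<Rightarrow> 'a^'n) \<Rightarrow> 'a^'n^'n" where
  "crossop F D = (\<chi> i j. \<Sum>k\<in>UNIV. F k $ i * cj (D k $ j) + D k $ i * cj (F k $ j))"

lemma frop_path: "frop (\<lambda>k. F k + t *\<^sub>R D k) = frop F + t *\<^sub>R crossop F D + t^2 *\<^sub>R frop D"
proof -
  have "frop (\<lambda>k. F k + t *\<^sub>R D k) $ i $ j = (frop F + t *\<^sub>R crossop F D + t^2 *\<^sub>R frop D) $ i $ j" for i j
  proof -
    have "(F k $ i + t *\<^sub>R D k $ i) * cj (F k $ j + t *\<^sub>R D k $ j)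
      = F k $ i * cj (F k $ j) + t *\<^sub>R (F k $ i * cj (D k $ j) + D k $ i * cj (F k $ j))
        + t^2 *\<^sub>R (D k $ i * cj (D k $ j))" for k
      by (simp add: cj_add cj_mult scaleR_conv_of_real algebra_simps power2_eq_square)
    then show ?thesis
      by (simp add: frop_def crossop_def sum.distrib scaleR_sum_right[symmetric])
  qed
  then show ?thesis by (simp add: vec_eq_iff)
qed

lemma core:
  fixes F H :: "'m::finite \<Rightarrow> 'a^'n" and Lm :: "('m \<Rightarrow> 'a^'n) \<Rightarrow> 'a^'A::finite^'B::finite"
  assumes Lchar: "\<And>G. injg G \<longleftrightarrow> inj ((*v) (Lm G))"
    and Lpoly: "\<And>b a. isp (\<lambda>t. Lm (\<lambda>k. F k + t *\<^sub>R (H k - F k)) $ b $ a)"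
    and injH: "injg H" and pF: "parsevalg F" and e: "e > 0"
  shows "\<exists>G. parsevalg G \<and> injg G \<and> frame_dist F G < e"
proof -
  define D where "D k = H k - F k" for k
  define G where "G t = (\<lambda>k. F k + t *\<^sub>R D k)" for t :: real
  define X where "X = crossop F D"
  define Y where "Y = frop D"
  define \<rho> where "\<rho> t = \<bar>t\<bar> * norm X + t^2 * norm Y" for t :: real
  define \<beta> where "\<beta> t k = \<bar>t\<bar> * norm (D k) + (\<rho> t / (1 - \<rho> t)) * (norm (F k) + \<bar>t\<bar> * norm (D k))" for t k
  define B where "B t = sqrt (\<Sum>k\<in>UNIV. (\<beta> t k)^2)" for t
  have fin: "finite {t. \<not> inj ((*v) (Lm (G t)))}"
  proof (rule finite_bad)
    show "isp (\<lambda>t. Lm (G t) $ b $ a)" for b a using Lpoly by (simp add: G_def D_def)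
    have "G 1 = H" by (simp add: G_def D_def)
    then show "inj ((*v) (Lm (G 1)))" using Lchar injH by simp
  qed
  have ev1: "\<forall>\<^sub>F t in at 0. t \<notin> {t. \<not> inj ((*v) (Lm (G t)))}"
    using islimpt_finite[OF fin] islimpt_iff_eventually by blast
  have "(\<rho> \<longlongrightarrow> \<rho> 0) (at 0)" unfolding \<rho>_def by (intro tendsto_intros)
  then have ev2: "\<forall>\<^sub>F t in at 0. \<rho> t < 1/2"
    by (rule order_tendstoD(2)) (simp add: \<rho>_def)
  have "(B \<longlongrightarrow> B 0) (at 0)" unfolding B_def \<beta>_def \<rho>_def by (intro tendsto_intros) simp_all
  then have ev3: "\<forall>\<^sub>F t in at 0. B t < e"
    by (rule order_tendstoD(2)) (simp add: B_def \<beta>_def \<rho>_def e)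
  obtain t where t1: "inj ((*v) (Lm (G t)))" and t2: "\<rho> t < 1/2" and t3: "B t < e"
    using eventually_happens'[OF at_neq_bot eventually_conj[OF ev1 eventually_conj[OF ev2 ev3]]] by auto
  define E where "E = frop (G t) - mat 1"
  have FI: "frop F = mat 1" using pF parseval_iff by blast
  have E_eq: "E = t *\<^sub>R X + t^2 *\<^sub>R Y"
    by (simp add: E_def G_def frop_path FI X_def Y_def)
  have hE: "hT E = E" by (simp add: E_def hT_diff hT_frop)
  have nE: "norm E \<le> \<rho> t"
  proof -
    have "norm E \<le> norm (t *\<^sub>R X) + norm (t^2 *\<^sub>R Y)" unfolding E_eq by (rule norm_triangle_ineq)
    then show ?thesis by (simp add: \<rho>_def)
  qed
  have \<rho>0: "0 \<le> \<rho> t" by (simp add: \<rho>_def)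
  have nE1: "norm E < 1" using nE t2 by simp
  define A where "A = sqi E"
  have hA: "hT A = A" using hT_sqi[OF hE nE1] by (simp add: A_def)
  have AAS: "A ** A ** (mat 1 + E) = mat 1" using sqi_sq[OF nE1] by (simp add: A_def)
  have AE: "A ** E = E ** A" using sqi_comm[OF nE1] by (simp add: A_def)
  have frG: "frop (G t) = mat 1 + E" by (simp add: E_def)
  have comm: "A ** (mat 1 + E) = (mat 1 + E) ** A"
    by (simp add: matrix_add_ldistrib matrix_add_rdistrib AE)
  define B' where "B' = A ** (mat 1 + E)"
  have AB: "A ** B' = mat 1" using AAS by (simp add: B'_def matrix_mul_assoc)
  have BA: "B' ** A = mat 1"
  proof -
    have "B' ** A = A ** ((mat 1 + E) ** A)" by (simp add: B'_def matrix_mul_assoc)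
    also have "\<dots> = A ** A ** (mat 1 + E)" by (simp add: comm[symmetric] matrix_mul_assoc)
    finally show ?thesis using AAS by simp
  qed
  define G' where "G' = (\<lambda>k. A *v G t k)"
  have par: "parsevalg G'"
  proof -
    have "frop G' = A ** (mat 1 + E) ** A" by (simp add: G'_def frop_mult frG hA)
    also have "\<dots> = mat 1" using BA by (simp add: B'_def)
    finally show ?thesis using parseval_iff by blast
  qed
  have inj: "injg G'"
    unfolding G'_def by (rule injg_transform[OF _ hA AB BA]) (use Lchar t1 in blast)
  have nA: "norm (A - mat 1) \<le> \<rho> t / (1 - \<rho> t)"
  proof -
    have "norm (A - mat 1) \<le> norm E / (1 - norm E)" using sqi_bound[OF nE1] by (simp add: A_def)
    also have "\<dots> \<le> \<rho> t / (1 - \<rho> t)"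
      using nE t2 \<rho>0 by (intro frac_le) simp_all
    finally show ?thesis .
  qed
  have dk: "norm (F k - G' k) \<le> \<beta> t k" for k
  proof -
    have g: "norm (G t k) \<le> norm (F k) + \<bar>t\<bar> * norm (D k)"
      unfolding G_def using norm_triangle_ineq[of "F k" "t *\<^sub>R D k"] by simp
    have h: "norm ((A - mat 1) *v G t k) \<le> (\<rho> t / (1 - \<rho> t)) * (norm (F k) + \<bar>t\<bar> * norm (D k))"
      by (rule order_trans[OF norm_mv], rule mult_mono[OF nA g]) (use \<rho>0 t2 in simp_all)
    have "F k - G' k = - ((A - mat 1) *v G t k) - t *\<^sub>R D k"
      by (simp add: G'_def G_def matrix_vector_mult_diff_rdistrib algebra_simps)
    then have "norm (F k - G' k) \<le> norm ((A - mat 1) *v G t k) + norm (t *\<^sub>R D k)"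
      by (metis norm_minus_cancel norm_triangle_ineq4)
    then show ?thesis using h by (simp add: \<beta>_def)
  qed
  have "frame_dist F G' \<le> B t"
    unfolding frame_dist_def B_def
    by (intro real_sqrt_le_mono sum_mono power_mono dk) simp
  then have "frame_dist F G' < e" using t3 by simp
  then show ?thesis using par inj by blast
qed

end

context cjl
begin

lemma sag_add: "sag T \<Longrightarrow> T (x + y) = T x + T y"
  by (simp add: sag_def)

lemma sag_smult: "sag T \<Longrightarrow> T (c *s x) = c *s T x"
  by (simp add: sag_def)

lemma sag_herm: "sag T \<Longrightarrow> ip (T y) x = cj (ip (T x) y)"
  by (simp add: sag_def ip_cj)

lemma sag_quad2:
  assumes "sag T"
  shows "ip (T (axis i 1 + c *s axis j 1)) (axis i 1 + c *s axis j 1)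
    = ip (T (axis i 1)) (axis i 1) + cj c * ip (T (axis i 1)) (axis j 1)
      + c * ip (T (axis j 1)) (axis i 1) + c * cj c * ip (T (axis j 1)) (axis j 1)"
  using assms
  by (simp add: sag_add sag_smult ip_add_left ip_add_right ip_smult_left ip_smult_right algebra_simps)

lemma sag_zero_if:
  assumes "sag T" and "\<And>a b. ip (T (axis a 1)) (axis b 1) = 0"
  shows "T = (\<lambda>_. 0)"
proof
  fix x
  have "T (axis a 1) $ b = 0" for a b using assms(2)[of a b] by (simp add: ip_axis)
  then have "mt T = 0" by (simp add: mt_def vec_eq_iff)
  then show "T x = 0" using sag_expand[OF assms(1)] by simp
qed

end

interpretation R: cjl "id :: real \<Rightarrow> real"
  by unfold_locales (simp_all add: power2_eq_square)

lemma R_ip: "R.ip x y = x \<bullet> y"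
  by (simp add: R.ip_def inner_vec_def inner_real_def)

lemma R_parseval: "parseval_real F \<longleftrightarrow> R.parsevalg F"
  by (simp add: parseval_real_def R.parsevalg_def R_ip)

lemma R_sag: "self_adjoint_real T \<longleftrightarrow> R.sag T"
  unfolding self_adjoint_real_def R.sag_def linear_iff scalar_mult_eq_scaleR R_ip
  by (metis (no_types))

lemma R_inj: "injective_real F \<longleftrightarrow> R.injg F"
  by (simp add: injective_real_def R.injg_def R_sag R_ip)

lemma sum_pairs: "(\<Sum>p\<in>UNIV. f p) = (\<Sum>i\<in>UNIV. \<Sum>j\<in>UNIV. f (i,j))"
  by (simp add: sum.cartesian_product)

definition Lr :: "('m::finite \<Rightarrow> real^'n) \<Rightarrow> real^('n \<times> 'n)^('m + 'n \<times> 'n)" where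
  "Lr G = (\<chi> b p. case b of Inl k \<Rightarrow> G k $ fst p * G k $ snd p
      | Inr q \<Rightarrow> (if p = q then 1 else 0) - (if p = (snd q, fst q) then 1 else 0))"

lemma Lr_Inl: "(Lr G *v z) $ Inl k = (\<Sum>i\<in>UNIV. \<Sum>j\<in>UNIV. G k $ i * G k $ j * z $ (i,j))"
  by (simp add: Lr_def matrix_vector_mult_def sum_pairs)

lemma Lr_Inr: "(Lr G *v z) $ Inr q = z $ q - z $ (snd q, fst q)"
proof -
  have "(Lr G *v z) $ Inr q = (\<Sum>p\<in>UNIV. (if p = q then z$p else 0) - (if p = (snd q, fst q) then z$p else 0))"
    by (auto simp: Lr_def matrix_vector_mult_def intro!: sum.cong)
  also have "\<dots> = z $ q - z $ (snd q, fst q)"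
    by (simp add: sum_subtractf)
  finally show ?thesis .
qed

lemma R_ip_Y: "R.ip ((\<chi> i j. z $ (i,j)) *v g) g = (\<Sum>i\<in>UNIV. \<Sum>j\<in>UNIV. g $ i * g $ j * z $ (i,j))"
  by (simp add: R.ip_def matrix_vector_mult_def sum_distrib_right sum_distrib_left mult_ac)

lemma Lr_char: "R.injg G \<longleftrightarrow> inj ((*v) (Lr G))"
proof
  assume ig: "R.injg G"
  have k: "z = 0" if z: "Lr G *v z = 0" for z
  proof -
    define Y where "Y = (\<chi> i j. z $ (i,j))"
    have sym: "z $ (i,j) = z $ (j,i)" for i j
      using arg_cong[OF z, of "\<lambda>v. v $ Inr (i,j)"] by (simp add: Lr_Inr)
    have hY: "R.hT Y = Y" by (simp add: R.hT_def Y_def vec_eq_iff sym)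
    have sY: "R.sag (\<lambda>x. Y *v x)" by (rule R.sag_mat[OF hY])
    have "R.ip (Y *v G k) (G k) = 0" for k
      using arg_cong[OF z, of "\<lambda>v. v $ Inl k"] by (simp add: Lr_Inl Y_def R_ip_Y)
    then have "(\<lambda>x. Y *v x) = (\<lambda>_. 0)" using ig sY unfolding R.injg_def by blast
    then have "Y = 0" by (intro R.matrix_eq_0_if) metis
    then show "z = 0" by (simp add: Y_def vec_eq_iff)
  qed
  show "inj ((*v) (Lr G))"
  proof (rule injI)
    fix x y assume "Lr G *v x = Lr G *v y"
    then have "Lr G *v (x - y) = 0" by (simp add: matrix_vector_mult_diff_distrib)
    then have "x - y = 0" by (rule k)
    then show "x = y" by simp
  qed
next
  assume inj: "inj ((*v) (Lr G))"
  show "R.injg G" unfolding R.injg_def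
  proof (intro allI impI, elim conjE)
    fix T assume sT: "R.sag T" and z: "\<forall>k. R.ip (T (G k)) (G k) = 0"
    define Y where "Y = R.mt T"
    have hY: "R.hT Y = Y" using R.hT_mt[OF sT] by (simp add: Y_def)
    then have Ysym: "Y $ j $ i = Y $ i $ j" for i j
      by (metis (no_types, lifting) R.hT_def id_apply vec_lambda_beta)
    have Te: "T x = Y *v x" for x using R.sag_expand[OF sT] by (simp add: Y_def)
    define w where "w = (\<chi> p. Y $ fst p $ snd p)"
    have Yw: "Y = (\<chi> i j. w $ (i,j))" by (simp add: w_def vec_eq_iff)
    have "Lr G *v w = 0"
    proof (subst vec_eq_iff, intro allI)
      fix b show "(Lr G *v w) $ b = 0 $ b"
      proof (cases b)
        case (Inl k)
        have "(Lr G *v w) $ Inl k = R.ip (Y *v G k) (G k)"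
          unfolding Lr_Inl Yw R_ip_Y ..
        also have "\<dots> = 0" using z Te by simp
        finally show ?thesis using Inl by simp
      next
        case (Inr q)
        then show ?thesis by (simp add: Lr_Inr w_def Ysym)
      qed
    qed
    then have "w = 0" using inj by (metis injD matrix_vector_mult_0_right)
    then have "Y = 0" by (simp add: Yw vec_eq_iff)
    then show "T = (\<lambda>_. 0)" using Te by (simp add: fun_eq_iff)
  qed
qed

lemma R_isp_lin: "R.isp (\<lambda>t. a + t * b)"
  unfolding R.isp_def by (rule exI[of _ "[:a, b:]"]) simp

lemma Lr_poly: "R.isp (\<lambda>t. Lr (\<lambda>k. F k + t *\<^sub>R (H k - F k)) $ b $ a)"
proof (cases b)
  case (Inl k) then show ?thesis
    by (simp add: Lr_def, intro R.isp_mult R_isp_lin)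
next
  case (Inr q) then show ?thesis
    by (simp add: Lr_def R.isp_const)
qed

lemma card_pairs: "card (UNIV :: ('n::finite \<times> 'n) set) = CARD('n) * CARD('n)"
  by (simp add: UNIV_Times_UNIV[symmetric] card_cartesian_product del: UNIV_Times_UNIV)

lemma real_H_exists:
  assumes card: "CARD('n::finite) * (CARD('n) + 1) \<le> 2 * CARD('m::finite)"
  shows "\<exists>H :: 'm \<Rightarrow> real^'n. R.injg H"
proof -
  define P where "P = {(i::'n, j::'n). to_nat i \<le> to_nat j}"
  define S where "S = {(i::'n, j::'n). to_nat j \<le> to_nat i}"
  have PS: "P \<union> S = UNIV" by (auto simp: P_def S_def)
  have "P \<inter> S = {(i,j). to_nat i = to_nat j}" by (auto simp: P_def S_def)
  also have "\<dots> = (\<lambda>i. (i,i)) ` UNIV" by (auto simp: inj_eq[OF inj_to_nat])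
  finally have PiS: "P \<inter> S = (\<lambda>i. (i,i)) ` UNIV" .
  have cPiS: "card (P \<inter> S) = CARD('n)"
    unfolding PiS by (rule card_image) (simp add: inj_on_def)
  have "S = (\<lambda>(i,j). (j,i)) ` P" by (auto simp: P_def S_def image_iff)
  moreover have "inj_on (\<lambda>(i::'n,j::'n). (j,i)) P" by (auto simp: inj_on_def)
  ultimately have cS: "card S = card P"
    by (simp add: card_image)
  have "card P + card S = card (P \<union> S) + card (P \<inter> S)"
    by (rule card_Un_Int) simp_all
  then have "2 * card P = CARD('n) * CARD('n) + CARD('n)"
    using cS cPiS PS card_pairs by simp
  then have "card P \<le> card (UNIV :: 'm set)" using card by simp
  then obtain \<phi> :: "'n \<times> 'n \<Rightarrow> 'm" where \<phi>: "inj_on \<phi> P" using card_le_inj[of P "UNIV :: 'm set"] by auto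
  define H where "H k = (if k \<in> \<phi> ` P then axis (fst (inv_into P \<phi> k)) 1 + axis (snd (inv_into P \<phi> k)) 1 else (0::real^'n))" for k
  have Hp: "H (\<phi> p) = axis (fst p) 1 + axis (snd p) 1" if "p \<in> P" for p
    using that by (simp add: H_def inv_into_f_f[OF \<phi>])
  show ?thesis
  proof (intro exI[of _ H], unfold R.injg_def, intro allI impI, elim conjE)
    fix T assume sT: "R.sag T" and z: "\<forall>k. R.ip (T (H k)) (H k) = 0"
    define q where "q a b = R.ip (T (axis a 1)) (axis b 1)" for a b
    have qs: "q b a = q a b" for a b using R.sag_herm[OF sT] by (simp add: q_def)
    have quad: "q i i + q i j + q j i + q j j = 0" if "(i,j) \<in> P" for i j
      using z[rule_format, of "\<phi> (i,j)"] R.sag_quad2[OF sT, of i 1 j] Hp[OF that] by (simp add: q_def)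
    have qii: "q i i = 0" for i using quad[of i i] by (simp add: P_def)
    have "q a b = 0" for a b
    proof (cases "to_nat a \<le> to_nat b")
      case True then show ?thesis using quad[of a b] qii qs[of a b] by (simp add: P_def)
    next
      case False then have "to_nat b \<le> to_nat a" by simp
      then show ?thesis using quad[of b a] qii qs[of a b] by (simp add: P_def)
    qed
    then show "T = (\<lambda>_. 0)" using R.sag_zero_if[OF sT] q_def by simp
  qed
qed

lemma real_main:
  fixes F :: "'m::finite \<Rightarrow> real^'n::finite"
  assumes "CARD('n) * (CARD('n) + 1) \<le> 2 * CARD('m)"
    and "parseval_real F" and "e > 0"
  shows "\<exists>G. parseval_real G \<and> injective_real G \<and> frame_dist F G < e"
proof -
  obtain H :: "'m \<Rightarrow> real^'n" where H: "R.injg H" using real_H_exists[OF assms(1)] by blast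
  have "\<exists>G. R.parsevalg G \<and> R.injg G \<and> frame_dist F G < e"
    by (rule R.core[OF Lr_char Lr_poly H]) (use assms in \<open>simp_all add: R_parseval\<close>)
  then show ?thesis by (simp add: R_parseval R_inj)
qed


interpretation C: cjl cnj
proof
  fix a b :: complex and r :: real
  show "cnj (a + b) = cnj a + cnj b" by simp
  show "cnj (a * b) = cnj a * cnj b" by simp
  show "cnj (cnj a) = a" by simp
  show "cnj (of_real r) = of_real r" by simp
  show "a * cnj a = of_real ((norm a)^2)" by (rule complex_norm_square[symmetric])
qed

lemma C_ip: "C.ip = cinner"
  by (simp add: fun_eq_iff C.ip_def cinner_def)

lemma C_parseval: "parseval_complex F \<longleftrightarrow> C.parsevalg F"
  by (simp add: parseval_complex_def C.parsevalg_def C_ip)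

lemma C_sag: "self_adjoint_complex T \<longleftrightarrow> C.sag T"
  by (simp add: self_adjoint_complex_def C.sag_def C_ip)

lemma C_inj: "injective_complex F \<longleftrightarrow> C.injg F"
  by (simp add: injective_complex_def C.injg_def C_sag C_ip)

definition Lc :: "('m::finite \<Rightarrow> complex^'n) \<Rightarrow> complex^('n \<times> 'n)^'m" where
  "Lc G = (\<chi> k p. cnj (G k $ fst p) * G k $ snd p)"

lemma Lc_k: "(Lc G *v z) $ k = (\<Sum>i\<in>UNIV. \<Sum>j\<in>UNIV. cnj (G k $ i) * G k $ j * z $ (i,j))"
  by (simp add: Lc_def matrix_vector_mult_def sum_pairs)

lemma C_ip_Y: "C.ip ((\<chi> i j. z $ (i,j)) *v g) g = (\<Sum>i\<in>UNIV. \<Sum>j\<in>UNIV. cnj (g $ i) * g $ j * z $ (i,j))"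
  by (simp add: C.ip_def matrix_vector_mult_def sum_distrib_right sum_distrib_left mult_ac)

lemma Lc_char: "C.injg G \<longleftrightarrow> inj ((*v) (Lc G))"
proof
  assume ig: "C.injg G"
  have k: "z = 0" if z: "Lc G *v z = 0" for z
  proof -
    define Y where "Y = (\<chi> i j. z $ (i,j))"
    have kY: "C.ip (Y *v G k) (G k) = 0" for k
      using arg_cong[OF z, of "\<lambda>v. v $ k"] by (simp add: Lc_k Y_def C_ip_Y)
    have kYh: "C.ip (C.hT Y *v G k) (G k) = 0" for k
    proof -
      have "C.ip (C.hT Y *v G k) (G k) = C.ip (G k) (Y *v G k)" by (simp add: C.ip_matrix)
      also have "\<dots> = cnj (C.ip (Y *v G k) (G k))" by (simp add: C.ip_cj)
      finally show ?thesis using kY by simp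
    qed
    define M1 where "M1 = Y + C.hT Y"
    define M2 where "M2 = (\<chi> i j. \<i> * (Y $ i $ j - cnj (Y $ j $ i)))"
    have h1: "C.hT M1 = M1" by (simp add: M1_def C.hT_add add.commute)
    have h2: "C.hT M2 = M2" by (simp add: M2_def C.hT_def vec_eq_iff algebra_simps)
    have M2v: "M2 *v x = \<i> *s (Y *v x - C.hT Y *v x)" for x
      by (simp add: M2_def C.hT_def matrix_vector_mult_def vec_eq_iff sum_distrib_left
          algebra_simps sum_subtractf)
    have z1: "\<forall>k. C.ip (M1 *v G k) (G k) = 0"
      by (simp add: M1_def matrix_vector_mult_add_rdistrib C.ip_add_left kY kYh)
    have z2: "\<forall>k. C.ip (M2 *v G k) (G k) = 0"
      by (simp add: M2v C.ip_smult_left C.ip_diff_left kY kYh)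
    have "(\<lambda>x. M1 *v x) = (\<lambda>_. 0)" using ig C.sag_mat[OF h1] z1 unfolding C.injg_def by blast
    then have m1: "M1 = 0" by (intro C.matrix_eq_0_if) metis
    have "(\<lambda>x. M2 *v x) = (\<lambda>_. 0)" using ig C.sag_mat[OF h2] z2 unfolding C.injg_def by blast
    then have m2: "M2 = 0" by (intro C.matrix_eq_0_if) metis
    have "Y $ i $ j = 0" for i j
    proof -
      have a: "Y $ i $ j + cnj (Y $ j $ i) = 0"
        using arg_cong[OF m1, of "\<lambda>M. M $ i $ j"] by (simp add: M1_def C.hT_def)
      have b: "Y $ i $ j - cnj (Y $ j $ i) = 0"
        using arg_cong[OF m2, of "\<lambda>M. M $ i $ j"] by (simp add: M2_def)
      have "2 * Y $ i $ j = (Y $ i $ j + cnj (Y $ j $ i)) + (Y $ i $ j - cnj (Y $ j $ i))" by simp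
      then show ?thesis using a b by simp
    qed
    then show "z = 0" by (simp add: Y_def vec_eq_iff)
  qed
  show "inj ((*v) (Lc G))"
  proof (rule injI)
    fix x y assume "Lc G *v x = Lc G *v y"
    then have "Lc G *v (x - y) = 0" by (simp add: matrix_vector_mult_diff_distrib)
    then have "x - y = 0" by (rule k)
    then show "x = y" by simp
  qed
next
  assume inj: "inj ((*v) (Lc G))"
  show "C.injg G" unfolding C.injg_def
  proof (intro allI impI, elim conjE)
    fix T assume sT: "C.sag T" and z: "\<forall>k. C.ip (T (G k)) (G k) = 0"
    define Y where "Y = C.mt T"
    have Te: "T x = Y *v x" for x using C.sag_expand[OF sT] by (simp add: Y_def)
    define w where "w = (\<chi> p. Y $ fst p $ snd p)"
    have Yw: "Y = (\<chi> i j. w $ (i,j))" by (simp add: w_def vec_eq_iff)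
    have "Lc G *v w = 0"
    proof (subst vec_eq_iff, intro allI)
      fix k
      have "(Lc G *v w) $ k = C.ip (Y *v G k) (G k)"
        unfolding Lc_k Yw C_ip_Y ..
      also have "\<dots> = 0" using z Te by simp
      finally show "(Lc G *v w) $ k = 0 $ k" by simp
    qed
    then have "w = 0" using inj by (metis injD matrix_vector_mult_0_right)
    then have "Y = 0" by (simp add: Yw vec_eq_iff)
    then show "T = (\<lambda>_. 0)" using Te by (simp add: fun_eq_iff)
  qed
qed

lemma C_isp_lin: "C.isp (\<lambda>t. a + t *\<^sub>R b)"
  unfolding C.isp_def by (rule exI[of _ "[:a, b:]"]) (simp add: scaleR_conv_of_real)

lemma Lc_poly: "C.isp (\<lambda>t. Lc (\<lambda>k. F k + t *\<^sub>R (H k - F k)) $ b $ a)"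
  unfolding Lc_def vec_lambda_beta vector_add_component vector_scaleR_component
  by (intro C.isp_mult C.isp_cj C_isp_lin)

lemma complex_H_exists:
  assumes card: "CARD('n::finite)^2 \<le> CARD('m::finite)"
  shows "\<exists>H :: 'm \<Rightarrow> complex^'n. C.injg H"
proof -
  have "card (UNIV :: ('n \<times> 'n) set) \<le> card (UNIV :: 'm set)"
    using card card_pairs by (simp add: power2_eq_square)
  then obtain \<phi> :: "'n \<times> 'n \<Rightarrow> 'm" where \<phi>: "inj \<phi>"
    using card_le_inj[of "UNIV :: ('n\<times>'n) set" "UNIV :: 'm set"] by auto
  define cc where "cc i j = (if to_nat i < to_nat j then 1 else \<i>)" for i j :: 'n
  define H where "H k = (if k \<in> range \<phi> then axis (fst (inv \<phi> k)) 1 + cc (fst (inv \<phi> k)) (snd (inv \<phi> k)) *s axis (snd (inv \<phi> k)) 1 else (0::complex^'n))" for k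
  have Hp: "H (\<phi> (i,j)) = axis i 1 + cc i j *s axis j 1" for i j
  proof -
    have "inv \<phi> (\<phi> (i,j)) = (i,j)" by (rule inv_f_f[OF \<phi>])
    moreover have "\<phi> (i,j) \<in> range \<phi>" by (rule rangeI)
    ultimately show ?thesis unfolding H_def by (simp only: if_True fst_conv snd_conv)
  qed
  have "C.injg H"
    unfolding C.injg_def
  proof (intro allI impI)
    fix T assume asm: "C.sag T \<and> (\<forall>k. C.ip (T (H k)) (H k) = 0)"
    then have sT: "C.sag T" and z: "\<forall>k. C.ip (T (H k)) (H k) = 0" by simp_all
    define q where "q a b = C.ip (T (axis a 1)) (axis b 1)" for a b
    have qs: "q b a = cnj (q a b)" for a b unfolding q_def by (rule C.sag_herm[OF sT])
    have quad: "q i i + cnj (cc i j) * q i j + cc i j * q j i + cc i j * cnj (cc i j) * q j j = 0" for i j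
      using z[rule_format, of "\<phi> (i,j)"] C.sag_quad2[OF sT, of i "cc i j" j] Hp[of i j] by (simp add: q_def)
    have qii: "q i i = 0" for i
    proof -
      have "q i i + q i i = 0" using quad[of i i] by (simp add: cc_def algebra_simps)
      then show ?thesis by simp
    qed
    have qlt: "q a b = 0" if ab: "to_nat a < to_nat b" for a b
    proof -
      have e1: "q a b + cnj (q a b) = 0" using quad[of a b] ab qii qs[of a b] by (simp add: cc_def)
      have "\<not> to_nat b < to_nat a" using ab by simp
      then have e2: "\<i> * q a b - \<i> * cnj (q a b) = 0"
        using quad[of b a] qii qs[of a b] by (simp add: cc_def algebra_simps)
      then have e3: "q a b - cnj (q a b) = 0"
        by (metis complex_i_not_zero mult_eq_0_iff right_diff_distrib)
      have "2 * q a b = (q a b + cnj (q a b)) + (q a b - cnj (q a b))" by simp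
      then show ?thesis using e1 e3 by simp
    qed
    have "q a b = 0" for a b
    proof (cases "to_nat a < to_nat b")
      case True then show ?thesis by (rule qlt)
    next
      case False
      show ?thesis
      proof (cases "to_nat b < to_nat a")
        case True then show ?thesis using qlt[OF True] qs[of b a] by simp
      next
        case False
        with \<open>\<not> to_nat a < to_nat b\<close> have "a = b" using inj_to_nat by (metis injD not_less_iff_gr_or_eq)
        then show ?thesis using qii by simp
      qed
    qed
    then show "T = (\<lambda>_. 0)" using C.sag_zero_if[OF sT] q_def by simp
  qed
  then show ?thesis by blast
qed

lemma complex_main:
  fixes F :: "'m::finite \<Rightarrow> complex^'n::finite"
  assumes "CARD('n)^2 \<le> CARD('m)"
    and "parseval_complex F" and "e > 0"
  shows "\<exists>G. parseval_complex G \<and> injective_complex G \<and> frame_dist F G < e"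
proof -
  obtain H :: "'m \<Rightarrow> complex^'n" where H: "C.injg H" using complex_H_exists[OF assms(1)] by blast
  have "\<exists>G. C.parsevalg G \<and> C.injg G \<and> frame_dist F G < e"
    by (rule C.core[OF Lc_char Lc_poly H]) (use assms in \<open>simp_all add: C_parseval\<close>)
  then show ?thesis by (simp add: C_parseval C_inj)
qed

theorem mainTheorem7:
  shows "(2 * CARD('m::finite) \<ge> CARD('n::finite) * (CARD('n) + 1) \<longrightarrow>
          (\<forall>F :: 'm \<Rightarrow> real^'n. parseval_real F \<longrightarrow>
            (\<forall>e>0. \<exists>G. parseval_real G \<and> injective_real G \<and> frame_dist F G < e)))
       \<and> (CARD('m) \<ge> CARD('n)^2 \<longrightarrow>
          (\<forall>F :: 'm \<Rightarrow> complex^'n. parseval_complex F \<longrightarrow>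
            (\<forall>e>0. \<exists>G. parseval_complex G \<and> injective_complex G \<and> frame_dist F G < e)))"
  using real_main complex_main by blast


end
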